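(* Let $\mathcal E$ be either an energy-preserving channel or, more generally, a unital average-energy non-increasing channel on $S$, let $\tau\in\mathsf P(S)$ be a passive state, let $p\in[0,1]$, and define the channel $\mathcal C(\rho)=p\,\mathcal E(\rho)+(1-p)\,\tau$. Then $\mathsf{Erg}(\mathcal C(\rho))\le \mathsf{Erg}(\rho)$ for every state $\rho\in\mathsf{St}(S)$. In particular every channel obtained by energy-preserving channels and passive resets (EPCPR) is ergotropy non-increasing.
   Context: $S$ is a $d$-dimensional quantum system with non-degenerate Hamiltonian $H=\sum_{i=1}^d E_i|i\rangle\langle i|$, $E_1<E_2<\dots<E_d$; $\mathsf{St}(S)$ is the set of density matrices on $\mathbb C^d$. The ergotropy of $\rho$ is $\mathsf{Erg}(\rho)=\mathrm{Tr}[H\rho]-\min_U \mathrm{Tr}[HU\rho U^\dagger]$, minimum over all unitaries $U$. A state is passive if its ergotropy is zero; equivalently, it is of the form $\sum_i p_i|i\rangle\langle i|$ with $p_1\ge p_2\ge\dots\ge p_d$. $\mathsf P(S)$ denotes the set of passive states. An energy-preserving channel is a quantum channel (CPTP map) $\mathcal E$ with $\langle i|\mathcal E(\rho)|i\rangle=\langle i|\rho|i\rangle$ for all states $\rho$ and all $i$. A unital average-energy non-increasing channel is a quantum channel $\mathcal E$ with $\mathcal E(I)=I$ and $\mathrm{Tr}[H\mathcal E(\rho)]\le\mathrm{Tr}[H\rho]$ for all states $\rho$. *)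

theory Defs
  imports Complex_Main "Jordan_Normal_Form.Matrix"
begin

text \<open>Finite-dimensional quantum system of dimension d, matrices over the complex numbers
  indexed by 0..d-1 (the energy eigenbasis |i> corresponds to index i).\<close>

definition adj :: "complex mat \<Rightarrow> complex mat" where
  "adj A = mat (dim_col A) (dim_row A) (\<lambda>(i,j). cnj (A $$ (j,i)))"

definition mtrace :: "complex mat \<Rightarrow> complex" where
  "mtrace A = (\<Sum>i<dim_row A. A $$ (i,i))"

definition hermitian :: "complex mat \<Rightarrow> bool" where
  "hermitian A \<longleftrightarrow> adj A = A"

definition psd :: "nat \<Rightarrow> complex mat \<Rightarrow> bool" where
  "psd d A \<longleftrightarrow> A \<in> carrier_mat d d \<and> hermitian A \<and>
     (\<forall>v \<in> carrier_vec d. 0 \<le> Re (conjugate v \<bullet> (A *\<^sub>v v)) )"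

definition density :: "nat \<Rightarrow> complex mat \<Rightarrow> bool" where
  "density d \<rho> \<longleftrightarrow> psd d \<rho> \<and> mtrace \<rho> = 1"

definition unitary :: "nat \<Rightarrow> complex mat \<Rightarrow> bool" where
  "unitary d U \<longleftrightarrow> U \<in> carrier_mat d d \<and> adj U * U = 1\<^sub>m d \<and> U * adj U = 1\<^sub>m d"

definition hamiltonian :: "nat \<Rightarrow> (nat \<Rightarrow> real) \<Rightarrow> complex mat" where
  "hamiltonian d En = mat d d (\<lambda>(i,j). if i = j then complex_of_real (En i) else 0)"

definition energy :: "nat \<Rightarrow> (nat \<Rightarrow> real) \<Rightarrow> complex mat \<Rightarrow> real" where
  "energy d En \<rho> = Re (mtrace (hamiltonian d En * \<rho>))"

text \<open>Ergotropy: Tr[H rho] - min_U Tr[H U rho U^dagger] (minimum written as infimum,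
  which is attained since the unitary group is compact).\<close>
definition ergotropy :: "nat \<Rightarrow> (nat \<Rightarrow> real) \<Rightarrow> complex mat \<Rightarrow> real" where
  "ergotropy d En \<rho> = energy d En \<rho> -
     (INF U \<in> {U. unitary d U}. energy d En (U * \<rho> * adj U))"

definition passive_state :: "nat \<Rightarrow> (nat \<Rightarrow> real) \<Rightarrow> complex mat \<Rightarrow> bool" where
  "passive_state d En \<rho> \<longleftrightarrow> density d \<rho> \<and> ergotropy d En \<rho> = 0"

definition quantum_channel :: "nat \<Rightarrow> (complex mat \<Rightarrow> complex mat) \<Rightarrow> bool" where
  "quantum_channel d \<Phi> \<longleftrightarrow> (\<exists>Ks :: complex mat list.
      (\<forall>K \<in> set Ks. K \<in> carrier_mat d d) \<and>
      foldr (\<lambda>K acc. adj K * K + acc) Ks (0\<^sub>m d d) = 1\<^sub>m d \<and>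
      (\<forall>\<rho> \<in> carrier_mat d d. \<Phi> \<rho> = foldr (\<lambda>K acc. K * \<rho> * adj K + acc) Ks (0\<^sub>m d d)))"

definition energy_preserving :: "nat \<Rightarrow> (complex mat \<Rightarrow> complex mat) \<Rightarrow> bool" where
  "energy_preserving d \<Phi> \<longleftrightarrow> quantum_channel d \<Phi> \<and>
     (\<forall>\<rho>. density d \<rho> \<longrightarrow> (\<forall>i<d. \<Phi> \<rho> $$ (i,i) = \<rho> $$ (i,i)))"

definition unital_energy_nonincreasing ::
  "nat \<Rightarrow> (nat \<Rightarrow> real) \<Rightarrow> (complex mat \<Rightarrow> complex mat) \<Rightarrow> bool" where
  "unital_energy_nonincreasing d En \<Phi> \<longleftrightarrow> quantum_channel d \<Phi> \<and> \<Phi> (1\<^sub>m d) = 1\<^sub>m d \<and>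
     (\<forall>\<rho>. density d \<rho> \<longrightarrow> energy d En (\<Phi> \<rho>) \<le> energy d En \<rho>)"

end

theory Submission
  imports Defs "Jordan_Normal_Form.Schur_Decomposition" "HOL-Combinatorics.Permutations"
begin



lemma adj_dim[simp]: "dim_row (adj A) = dim_col A" "dim_col (adj A) = dim_row A"
  unfolding adj_def by auto

lemma adj_index[simp]: "i < dim_col A \<Longrightarrow> j < dim_row A \<Longrightarrow> adj A $$ (i,j) = cnj (A $$ (j,i))"
  unfolding adj_def by auto

lemma adj_carrier[simp,intro]: "A \<in> carrier_mat n m \<Longrightarrow> adj A \<in> carrier_mat m n"
  unfolding adj_def by auto

lemma adj_adj[simp]: "adj (adj A) = A"
  by (rule eq_matI) auto

lemma adj_mult: assumes "A \<in> carrier_mat n k" "B \<in> carrier_mat k m"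
  shows "adj (A * B) = adj B * adj A"
  by (rule eq_matI) (use assms in \<open>auto simp: scalar_prod_def cnj_sum mult.commute intro!: sum.cong\<close>)

lemma adj_one[simp]: "adj (1\<^sub>m n) = 1\<^sub>m n"
  by (rule eq_matI) auto

lemma adj_zero[simp]: "adj (0\<^sub>m n m) = 0\<^sub>m m n"
  by (rule eq_matI) auto

lemma adj_add: assumes "A \<in> carrier_mat n m" "B \<in> carrier_mat n m"
  shows "adj (A + B) = adj A + adj B"
  by (rule eq_matI) (use assms in auto)

lemma adj_smult: "adj (c \<cdot>\<^sub>m A) = cnj c \<cdot>\<^sub>m adj A"
  by (rule eq_matI) auto

definition diagm :: "nat \<Rightarrow> (nat \<Rightarrow> real) \<Rightarrow> complex mat" where
  "diagm n lam = mat n n (\<lambda>(i,j). if i = j then complex_of_real (lam i) else 0)"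

lemma diagm_carrier[simp]: "diagm n lam \<in> carrier_mat n n"
  unfolding diagm_def by auto

lemma diagm_dim[simp]: "dim_row (diagm n lam) = n" "dim_col (diagm n lam) = n"
  unfolding diagm_def by auto

lemma hamiltonian_diagm: "hamiltonian d En = diagm d En"
  unfolding hamiltonian_def diagm_def by simp

lemma mult_diagm_index: assumes X: "X \<in> carrier_mat n k" and i: "i < n" and j: "j < k"
  shows "(X * diagm k lam) $$ (i,j) = X $$ (i,j) * complex_of_real (lam j)"
proof -
  have "(X * diagm k lam) $$ (i,j) = (\<Sum>l\<in>{0..<k}. X $$ (i,l) * diagm k lam $$ (l,j))"
    using X i j by (simp add: scalar_prod_def)
  also have "\<dots> = (\<Sum>l\<in>{j}. X $$ (i,l) * diagm k lam $$ (l,j))"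
    using j by (intro sum.mono_neutral_right) (auto simp: diagm_def)
  finally show ?thesis using j by (simp add: diagm_def)
qed

lemma diagm_mult_index: assumes X: "X \<in> carrier_mat n k" and i: "i < n" and j: "j < k"
  shows "(diagm n lam * X) $$ (i,j) = complex_of_real (lam i) * X $$ (i,j)"
proof -
  have "(diagm n lam * X) $$ (i,j) = (\<Sum>l\<in>{0..<n}. diagm n lam $$ (i,l) * X $$ (l,j))"
    using X i j by (simp add: scalar_prod_def)
  also have "\<dots> = (\<Sum>l\<in>{i}. diagm n lam $$ (i,l) * X $$ (l,j))"
    using i by (intro sum.mono_neutral_right) (auto simp: diagm_def)
  finally show ?thesis using i by (simp add: diagm_def)
qed

lemma energy_eq: assumes "X \<in> carrier_mat d d"
  shows "energy d En X = (\<Sum>i<d. En i * Re (X $$ (i,i)))"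
proof -
  have "energy d En X = Re (\<Sum>i<d. (diagm d En * X) $$ (i,i))"
    unfolding energy_def mtrace_def hamiltonian_diagm by simp
  also have "\<dots> = (\<Sum>i<d. Re ((diagm d En * X) $$ (i,i)))" by (simp only: Re_sum)
  also have "\<dots> = (\<Sum>i<d. En i * Re (X $$ (i,i)))"
    using assms by (intro sum.cong refl) (simp add: diagm_mult_index[OF assms] del: index_mult_mat(1))
  finally show ?thesis .
qed

lemma sandwich_diag: assumes X: "X \<in> carrier_mat n k" and i: "i < n"
  shows "(X * diagm k lam * adj X) $$ (i,i) = complex_of_real (\<Sum>j<k. (cmod (X $$ (i,j)))^2 * lam j)"
proof -
  have "(X * diagm k lam * adj X) $$ (i,i) = (\<Sum>j\<in>{0..<k}. (X * diagm k lam) $$ (i,j) * adj X $$ (j,i))"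
    using X i by (simp add: scalar_prod_def)
  also have "\<dots> = (\<Sum>j<k. complex_of_real ((cmod (X $$ (i,j)))^2 * lam j))"
  proof (rule sum.cong)
    fix j assume "j \<in> {..<k}"
    then have j: "j < k" by auto
    show "(X * diagm k lam) $$ (i,j) * adj X $$ (j,i) = complex_of_real ((cmod (X $$ (i,j)))^2 * lam j)"
    proof -
      have "(X * diagm k lam) $$ (i,j) * adj X $$ (j,i) = complex_of_real (lam j) * (X $$ (i,j) * cnj (X $$ (i,j)))"
        by (subst mult_diagm_index[OF X i j]) (use X i j in \<open>auto simp: mult_ac\<close>)
      also have "X $$ (i,j) * cnj (X $$ (i,j)) = complex_of_real ((cmod (X $$ (i,j)))^2)"
        by (rule complex_norm_square[symmetric])
      finally show ?thesis by (simp only: of_real_mult mult_ac)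
    qed
  qed auto
  finally show ?thesis by simp
qed

lemma sandwich_one_diag: assumes X: "X \<in> carrier_mat n k" and i: "i < n"
  shows "(X * adj X) $$ (i,i) = complex_of_real (\<Sum>j<k. (cmod (X $$ (i,j)))^2)"
proof -
  have "X * diagm k (\<lambda>_. 1) = X"
    using X by (intro eq_matI) (auto simp: mult_diagm_index[OF X] simp del: index_mult_mat(1))
  then show ?thesis using sandwich_diag[OF X i, of "\<lambda>_. 1"] by simp
qed

lemma adj_sandwich_one_diag: assumes X: "X \<in> carrier_mat n k" and j: "j < k"
  shows "(adj X * X) $$ (j,j) = complex_of_real (\<Sum>i<n. (cmod (X $$ (i,j)))^2)"
proof -
  have "adj X \<in> carrier_mat k n" using X by simp
  from sandwich_one_diag[OF this j] show ?thesis using X j by simp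
qed

lemma foldr_carrier:
  assumes "\<And>K. K \<in> set Ks \<Longrightarrow> f K \<in> carrier_mat d d"
  shows "foldr (\<lambda>K acc. f K + acc) Ks (0\<^sub>m d d) \<in> carrier_mat d d"
  using assms by (induction Ks) auto

lemma foldr_index:
  assumes "\<And>K. K \<in> set Ks \<Longrightarrow> f K \<in> carrier_mat d d" and "i < d" "j < d"
  shows "foldr (\<lambda>K acc. f K + acc) Ks (0\<^sub>m d d) $$ (i,j) = (\<Sum>K\<leftarrow>Ks. f K $$ (i,j))"
  using assms
proof (induction Ks)
  case Nil then show ?case by simp
next
  case (Cons K Ks)
  have c: "foldr (\<lambda>K acc. f K + acc) Ks (0\<^sub>m d d) \<in> carrier_mat d d"
    using Cons.prems by (intro foldr_carrier) auto
  have "f K \<in> carrier_mat d d" using Cons.prems by auto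
  then show ?case using Cons c by simp
qed

lemma foldr_sandwich:
  assumes g: "\<And>K. K \<in> set Ks \<Longrightarrow> g K \<in> carrier_mat d d"
  and X: "X \<in> carrier_mat d d" and Y: "Y \<in> carrier_mat d d"
  shows "foldr (\<lambda>K acc. X * g K * Y + acc) Ks (0\<^sub>m d d) = X * foldr (\<lambda>K acc. g K + acc) Ks (0\<^sub>m d d) * Y"
  using g
proof (induction Ks)
  case Nil then show ?case using X Y by simp
next
  case (Cons K Ks)
  have c: "foldr (\<lambda>K acc. g K + acc) Ks (0\<^sub>m d d) \<in> carrier_mat d d"
    using Cons.prems by (intro foldr_carrier) auto
  have gK: "g K \<in> carrier_mat d d" using Cons.prems by auto
  have "X * (g K + foldr (\<lambda>K acc. g K + acc) Ks (0\<^sub>m d d)) * Y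
        = X * g K * Y + X * foldr (\<lambda>K acc. g K + acc) Ks (0\<^sub>m d d) * Y"
    using X Y c gK by (simp add: mult_add_distrib_mat add_mult_distrib_mat[of _ d d])
  then show ?case using Cons by simp
qed




lemma zcnj: "z * cnj z = complex_of_real ((cmod z)^2)"
  by (rule complex_norm_square[symmetric])

lemma vnorm: assumes "v \<in> carrier_vec n"
  shows "v \<bullet>c v = complex_of_real (\<Sum>k<n. (cmod (v $ k))^2)"
proof -
  have "v \<bullet>c v = (\<Sum>k\<in>{0..<n}. v $ k * cnj (v $ k))"
    using assms by (simp add: scalar_prod_def)
  also have "\<dots> = (\<Sum>k<n. complex_of_real ((cmod (v $ k))^2))"
    by (intro sum.cong) (auto simp only: zcnj atLeast0LessThan)
  finally show ?thesis by simp
qed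

lemma vnorm_pos: assumes "v \<in> carrier_vec n" "v \<noteq> 0\<^sub>v n"
  shows "(\<Sum>k<n. (cmod (v $ k))^2) > 0"
proof -
  obtain k where k: "k < n" "v $ k \<noteq> 0"
    using assms by (metis eq_vecI carrier_vecD index_zero_vec(1,2))
  have "(cmod (v $ k))^2 \<le> (\<Sum>k<n. (cmod (v $ k))^2)"
    using k by (intro member_le_sum) auto
  moreover have "(cmod (v $ k))^2 > 0" using k by simp
  ultimately show ?thesis by linarith
qed

definition nrm :: "nat \<Rightarrow> complex vec \<Rightarrow> complex vec" where
  "nrm n v = complex_of_real (1 / sqrt (\<Sum>k<n. (cmod (v $ k))^2)) \<cdot>\<^sub>v v"

lemma nrm_carrier[simp]: "v \<in> carrier_vec n \<Longrightarrow> nrm n v \<in> carrier_vec n"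
  unfolding nrm_def by simp

lemma nrm_norm: assumes "v \<in> carrier_vec n" "v \<noteq> 0\<^sub>v n"
  shows "(\<Sum>k<n. (cmod (nrm n v $ k))^2) = 1"
proof -
  define r where "r = (\<Sum>k<n. (cmod (v $ k))^2)"
  have r: "r > 0" unfolding r_def by (rule vnorm_pos[OF assms])
  have "(\<Sum>k<n. (cmod (nrm n v $ k))^2) = (\<Sum>k<n. (1 / sqrt r)^2 * (cmod (v $ k))^2)"
    using assms(1) r unfolding nrm_def r_def[symmetric]
    by (intro sum.cong) (auto simp: norm_mult power_mult_distrib norm_divide power_divide)
  also have "\<dots> = (1 / sqrt r)^2 * r" unfolding r_def by (simp add: sum_distrib_left)
  also have "\<dots> = 1" using r by (simp add: power_divide)
  finally show ?thesis .
qed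

lemma nrm_id: assumes "v \<in> carrier_vec n" "(\<Sum>k<n. (cmod (v $ k))^2) = 1"
  shows "nrm n v = v"
  unfolding nrm_def assms(2) by simp

lemma unit_eigenvector: assumes A: "A \<in> carrier_mat n n" and n: "n > 0"
  shows "\<exists>e u. u \<in> carrier_vec n \<and> A *\<^sub>v u = e \<cdot>\<^sub>v u \<and> (\<Sum>k<n. (cmod (u $ k))^2) = 1"
proof -
  have "degree (char_poly A) = n" using degree_monic_char_poly[OF A] by simp
  then have "\<not> constant (poly (char_poly A))" using n by (simp add: constant_degree)
  then obtain z where "poly (char_poly A) z = 0" using fundamental_theorem_of_algebra by blast
  then have "eigenvalue A z" using eigenvalue_root_char_poly[OF A] by simp
  then obtain v where v: "v \<in> carrier_vec n" "v \<noteq> 0\<^sub>v n" "A *\<^sub>v v = z \<cdot>\<^sub>v v"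
    unfolding eigenvalue_def eigenvector_def using A by auto
  define u where "u = nrm n v"
  have "A *\<^sub>v u = z \<cdot>\<^sub>v u"
    unfolding u_def nrm_def using A v by (simp add: mult_mat_vec smult_smult_assoc mult.commute)
  moreover have "(\<Sum>k<n. (cmod (u $ k))^2) = 1" unfolding u_def by (rule nrm_norm[OF v(1,2)])
  ultimately show ?thesis using v(1) unfolding u_def by (intro exI[of _ z] exI[of _ "nrm n v"]) auto
qed

lemma nrm_cprod: assumes "v \<in> carrier_vec n" "w \<in> carrier_vec n"
  shows "\<exists>c. nrm n v \<bullet>c nrm n w = c * (v \<bullet>c w)"
proof -
  define a where "a = complex_of_real (1 / sqrt (\<Sum>k<n. (cmod (v $ k))^2))"
  define b where "b = complex_of_real (1 / sqrt (\<Sum>k<n. (cmod (w $ k))^2))"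
  have "nrm n v \<bullet>c nrm n w = (a \<cdot>\<^sub>v v) \<bullet> (conjugate b \<cdot>\<^sub>v conjugate w)"
    unfolding nrm_def a_def[symmetric] b_def[symmetric] using assms by (simp add: conjugate_smult_vec)
  also have "\<dots> = (a * conjugate b) * (v \<bullet>c w)"
    using assms by (simp add: smult_scalar_prod_distrib scalar_prod_smult_distrib)
  finally show ?thesis by blast
qed

lemma unitary_completion: assumes u: "u \<in> carrier_vec n" and n: "n > 0"
  and un: "(\<Sum>k<n. (cmod (u $ k))^2) = 1"
  shows "\<exists>W. unitary n W \<and> col W 0 = u"
proof -
  have u0: "u \<noteq> 0\<^sub>v n" using un by auto
  interpret cof_vec_space n "TYPE(complex)" .
  define b where "b = basis_completion u"
  from basis_completion[OF u u0, folded b_def]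
  have dist_b: "distinct b" and indep: "\<not> lin_dep (set b)" and b: "set b \<subseteq> carrier_vec n"
    and hdb: "hd b = u" and len_b: "length b = n" by auto
  from hdb len_b n obtain vs where bv: "b = u # vs" by (cases b) auto
  define ws where "ws = gram_schmidt n b"
  from gram_schmidt_result[OF b dist_b indep refl, folded ws_def]
  have ws: "set ws \<subseteq> carrier_vec n" "corthogonal ws" "length ws = n"
    by (auto simp: len_b)
  from gram_schmidt_hd[OF u, of vs, folded bv] have hdws: "hd ws = u" unfolding ws_def .
  have wsi: "ws ! i \<in> carrier_vec n" if "i < n" for i using ws that by auto
  have ws0: "ws ! i \<noteq> 0\<^sub>v n" if i: "i < n" for i
  proof
    assume "ws ! i = 0\<^sub>v n"
    then have "ws ! i \<bullet>c ws ! i = 0" by simp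
    then show False using corthogonalD[OF ws(2), of i i] i ws(3) by simp
  qed
  define us where "us = map (nrm n) ws"
  define W where "W = mat_of_cols n us"
  have lus: "length us = n" unfolding us_def using ws by simp
  have usi: "us ! i = nrm n (ws ! i)" if "i < n" for i unfolding us_def using that ws by simp
  have W: "W \<in> carrier_mat n n" unfolding W_def using lus by auto
  have Wi: "W $$ (k,j) = us ! j $ k" if "k < n" "j < n" for k j
    unfolding W_def using that lus by (simp add: mat_of_cols_index)
  have prod: "(adj W * W) $$ (i,j) = us ! j \<bullet>c us ! i" if ij: "i < n" "j < n" for i j
  proof -
    have "(adj W * W) $$ (i,j) = (\<Sum>k\<in>{0..<n}. cnj (W $$ (k,i)) * W $$ (k,j))"
      using W ij by (simp add: scalar_prod_def)
    also have "\<dots> = (\<Sum>k\<in>{0..<n}. us ! j $ k * cnj (us ! i $ k))"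
      using ij by (intro sum.cong) (auto simp: Wi mult.commute)
    also have "\<dots> = us ! j \<bullet>c us ! i"
    proof -
      have "us ! i \<in> carrier_vec n" using usi[OF ij(1)] wsi[OF ij(1)] by simp
      then show ?thesis by (simp add: scalar_prod_def)
    qed
    finally show ?thesis .
  qed
  have aw: "adj W * W = 1\<^sub>m n"
  proof (rule eq_matI)
    fix i j assume i: "i < dim_row (1\<^sub>m n)" and j: "j < dim_col (1\<^sub>m n)"
    then have i: "i < n" and j: "j < n" by auto
    show "(adj W * W) $$ (i,j) = 1\<^sub>m n $$ (i,j)"
    proof (cases "i = j")
      case True
      have "us ! j \<bullet>c us ! j = complex_of_real (\<Sum>k<n. (cmod (us ! j $ k))^2)"
        using usi[OF j] wsi[OF j] by (intro vnorm) simp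
      also have "\<dots> = 1" using nrm_norm[OF wsi[OF j] ws0[OF j]] usi[OF j] by simp
      finally show ?thesis using prod[OF i j] True i by simp
    next
      case False
      obtain c where "us ! j \<bullet>c us ! i = c * (ws ! j \<bullet>c ws ! i)"
        using nrm_cprod[OF wsi[OF j] wsi[OF i]] usi[OF i] usi[OF j] by auto
      moreover have "ws ! j \<bullet>c ws ! i = 0" using corthogonalD[OF ws(2), of j i] i j ws(3) False by simp
      ultimately show ?thesis using prod[OF i j] False i j by simp
    qed
  qed (use W in auto)
  have wa: "W * adj W = 1\<^sub>m n"
    by (rule mat_mult_left_right_inverse[OF adj_carrier[OF W] W aw])
  have "col W 0 = us ! 0" unfolding W_def using lus n usi[OF n] wsi[OF n] by (intro col_mat_of_cols) auto
  also have "\<dots> = nrm n u"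
  proof -
    have "ws ! 0 = u" using hdws ws(3) n by (metis hd_conv_nth list.size(3) not_less0)
    then show ?thesis using usi[OF n] by simp
  qed
  also have "\<dots> = u" by (rule nrm_id[OF u un])
  finally show ?thesis using W aw wa unfolding unitary_def by blast
qed

lemma unitary_carrier: "unitary n U \<Longrightarrow> U \<in> carrier_mat n n"
  unfolding unitary_def by auto

lemma unitary_adj: "unitary n U \<Longrightarrow> unitary n (adj U)"
  unfolding unitary_def by auto

lemma unitary_mult: assumes U: "unitary n U" and V: "unitary n V"
  shows "unitary n (U * V)"
proof -
  have Uc: "U \<in> carrier_mat n n" and Vc: "V \<in> carrier_mat n n" using U V unitary_carrier by auto
  have "adj (U * V) * (U * V) = adj V * (adj U * U) * V"
    using Uc Vc by (simp add: adj_mult[OF Uc Vc] assoc_mult_mat[of _ n n _ n _ n] mult_carrier_mat[of _ n n _ n])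
  also have "\<dots> = 1\<^sub>m n" using U V Vc unfolding unitary_def by simp
  finally have 1: "adj (U * V) * (U * V) = 1\<^sub>m n" .
  have 2: "(U * V) * adj (U * V) = 1\<^sub>m n"
    by (rule mat_mult_left_right_inverse[OF _ _ 1]) (use Uc Vc in auto)
  show ?thesis unfolding unitary_def using 1 2 Uc Vc by auto
qed

lemma spectral_aux: "\<forall>A. A \<in> carrier_mat n n \<longrightarrow> hermitian A \<longrightarrow>
  (\<exists>U lam. unitary n U \<and> adj U * A * U = diagm n lam)"
proof (induction n)
  case 0
  show ?case
  proof (intro allI impI)
    fix A :: "complex mat" assume A: "A \<in> carrier_mat 0 0"
    have "adj (1\<^sub>m 0) * A * 1\<^sub>m 0 = diagm 0 (\<lambda>_. 0)"
      using A by (intro eq_matI) auto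
    moreover have "unitary 0 (1\<^sub>m 0)" unfolding unitary_def by simp
    ultimately show "\<exists>U lam. unitary 0 U \<and> adj U * A * U = diagm 0 lam" by blast
  qed
next
  case (Suc m)
  show ?case
  proof (intro allI impI)
    fix A :: "complex mat" assume A: "A \<in> carrier_mat (Suc m) (Suc m)" and hA: "hermitian A"
    define N where "N = Suc m"
    have N: "N > 0" unfolding N_def by simp
    have AN: "A \<in> carrier_mat N N" using A N_def by simp
    obtain e u where u: "u \<in> carrier_vec N" and eig: "A *\<^sub>v u = e \<cdot>\<^sub>v u"
      and un: "(\<Sum>k<N. (cmod (u $ k))^2) = 1"
      using unit_eigenvector[OF AN N] by blast
    obtain W where W: "unitary N W" and W0: "col W 0 = u"
      using unitary_completion[OF u N un] by blast
    have Wc: "W \<in> carrier_mat N N" using W unitary_carrier by auto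
    define B where "B = adj W * A * W"
    have Bc: "B \<in> carrier_mat N N" unfolding B_def using Wc AN by auto
    have colB: "col B 0 = e \<cdot>\<^sub>v unit_vec N 0"
    proof -
      have "col B 0 = (adj W * A) *\<^sub>v col W 0" unfolding B_def
        by (rule col_mult2[of _ N N _ N]) (use Wc AN N in auto)
      also have "\<dots> = adj W *\<^sub>v (A *\<^sub>v u)" unfolding W0
        by (rule assoc_mult_mat_vec[of _ N N _ N]) (use Wc AN u in auto)
      also have "\<dots> = e \<cdot>\<^sub>v (adj W *\<^sub>v col W 0)" using eig Wc u W0 by (simp add: mult_mat_vec[of _ N N])
      also have "adj W *\<^sub>v col W 0 = col (adj W * W) 0"
        by (rule col_mult2[of _ N N _ N, symmetric]) (use Wc N in auto)
      also have "adj W * W = 1\<^sub>m N" using W unfolding unitary_def by simp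
      finally show ?thesis using N by simp
    qed
    have Bi0: "B $$ (i,0) = (if i = 0 then e else 0)" if i: "i < N" for i
    proof -
      have "B $$ (i,0) = col B 0 $ i" using Bc i by simp
      then show ?thesis using colB i N by simp
    qed
    have hB: "adj B = B"
    proof -
      have 1: "adj B = adj W * adj (adj W * A)" unfolding B_def
        by (rule adj_mult[of _ N N _ N]) (use Wc AN in auto)
      have 2: "adj (adj W * A) = adj A * W"
        using adj_mult[of "adj W" N N A N] Wc AN by simp
      have 3: "adj A = A" using hA unfolding hermitian_def .
      have 4: "B = adj W * (A * W)" unfolding B_def using Wc AN
        by (simp add: assoc_mult_mat[of _ N N _ N _ N])
      show ?thesis using 1 2 3 4 by simp
    qed
    have B0j: "B $$ (0,j) = cnj (B $$ (j,0))" if j: "j < N" for j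
    proof -
      have "B $$ (0,j) = adj B $$ (0,j)" using hB by simp
      also have "\<dots> = cnj (B $$ (j,0))" using Bc j N by simp
      finally show ?thesis .
    qed
    have ecnj: "cnj e = e" using B0j[OF N] Bi0[OF N] by simp
    have "Im e = 0" using arg_cong[OF ecnj, of Im] by simp
    then have er: "e = complex_of_real (Re e)" by (simp add: complex_eq_iff)
    define A3 where "A3 = mat m m (\<lambda>(i,j). B $$ (Suc i, Suc j))"
    have A3c: "A3 \<in> carrier_mat m m" unfolding A3_def by simp
    have hA3: "hermitian A3" unfolding hermitian_def
    proof (rule eq_matI)
      fix i j assume "i < dim_row A3" "j < dim_col A3"
      then have i: "i < m" and j: "j < m" using A3c by auto
      have "adj A3 $$ (i,j) = cnj (B $$ (Suc j, Suc i))" using i j unfolding A3_def by simp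
      also have "\<dots> = adj B $$ (Suc i, Suc j)" using Bc i j unfolding N_def by simp
      also have "\<dots> = A3 $$ (i,j)" using hB i j unfolding A3_def by simp
      finally show "adj A3 $$ (i,j) = A3 $$ (i,j)" .
    qed (use A3c in auto)
    obtain U' lam' where U': "unitary m U'" and D': "adj U' * A3 * U' = diagm m lam'"
      using Suc.IH A3c hA3 by blast
    have U'c: "U' \<in> carrier_mat m m" using U' unitary_carrier by auto
    define E1 where "E1 = mat 1 1 (\<lambda>_. e)"
    have E1c: "E1 \<in> carrier_mat 1 1" unfolding E1_def by simp
    have Bblock: "B = four_block_mat E1 (0\<^sub>m 1 m) (0\<^sub>m m 1) A3"
    proof (rule eq_matI)
      fix i j assume "i < dim_row (four_block_mat E1 (0\<^sub>m 1 m) (0\<^sub>m m 1) A3)"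
        "j < dim_col (four_block_mat E1 (0\<^sub>m 1 m) (0\<^sub>m m 1) A3)"
      then have i: "i < N" and j: "j < N" using E1c A3c unfolding N_def by auto
      show "B $$ (i,j) = four_block_mat E1 (0\<^sub>m 1 m) (0\<^sub>m m 1) A3 $$ (i,j)"
      proof (cases "i = 0")
        case True
        then show ?thesis using i j E1c A3c B0j[OF j] Bi0[OF j] ecnj unfolding N_def E1_def by auto
      next
        case False
        show ?thesis
        proof (cases "j = 0")
          case True
          then show ?thesis using i j E1c A3c Bi0[OF i] False unfolding N_def E1_def by auto
        next
          case F2: False
          then show ?thesis using i j E1c A3c False unfolding N_def A3_def by auto
        qed
      qed
    qed (use Bc E1c A3c N_def in auto)
    define V where "V = four_block_mat (1\<^sub>m 1) (0\<^sub>m 1 m) (0\<^sub>m m 1) U'"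
    have Vc: "V \<in> carrier_mat N N" unfolding V_def N_def using U'c by auto
    have adjV: "adj V = four_block_mat (1\<^sub>m 1) (0\<^sub>m 1 m) (0\<^sub>m m 1) (adj U')"
    proof (rule eq_matI)
      fix i j assume "i < dim_row (four_block_mat (1\<^sub>m 1) (0\<^sub>m 1 m) (0\<^sub>m m 1) (adj U'))"
        "j < dim_col (four_block_mat (1\<^sub>m 1) (0\<^sub>m 1 m) (0\<^sub>m m 1) (adj U'))"
      then have i: "i < Suc m" and j: "j < Suc m" using U'c by auto
      show "adj V $$ (i,j) = four_block_mat (1\<^sub>m 1) (0\<^sub>m 1 m) (0\<^sub>m m 1) (adj U') $$ (i,j)"
        using i j U'c unfolding V_def by auto
    qed (use U'c V_def in auto)
    have VV: "adj V * V = 1\<^sub>m N"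
    proof -
      have "adj V * V = four_block_mat (1\<^sub>m 1) (0\<^sub>m 1 m) (0\<^sub>m m 1) (adj U' * U')"
        unfolding adjV unfolding V_def
        by (subst mult_four_block_mat[of _ 1 1 _ m _ m _ _ 1 _ m]) (use U'c in auto)
      also have "adj U' * U' = 1\<^sub>m m" using U' unfolding unitary_def by simp
      finally show ?thesis using four_block_one_mat[of 1 m] unfolding N_def by simp
    qed
    have VV2: "V * adj V = 1\<^sub>m N" by (rule mat_mult_left_right_inverse[OF _ _ VV]) (use Vc in auto)
    have Vu: "unitary N V" unfolding unitary_def using Vc VV VV2 by auto
    define lam where "lam i = (if i = 0 then Re e else lam' (i - 1))" for i
    have VBV: "adj V * B * V = diagm N lam"
    proof -
      have h1: "adj V * B = four_block_mat E1 (0\<^sub>m 1 m) (0\<^sub>m m 1) (adj U' * A3)"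
        unfolding adjV Bblock
        by (subst mult_four_block_mat[of _ 1 1 _ m _ m _ _ 1 _ m]) (use U'c A3c E1c in auto)
      have "adj V * B * V = four_block_mat E1 (0\<^sub>m 1 m) (0\<^sub>m m 1) (adj U' * A3 * U')"
        unfolding h1 unfolding V_def
        by (subst mult_four_block_mat[of _ 1 1 _ m _ m _ _ 1 _ m]) (use U'c A3c E1c in auto)
      also have "\<dots> = diagm N lam"
        unfolding D'
      proof (rule eq_matI)
        fix i j assume "i < dim_row (diagm N lam)" "j < dim_col (diagm N lam)"
        then have i: "i < Suc m" and j: "j < Suc m" unfolding N_def by auto
        show "four_block_mat E1 (0\<^sub>m 1 m) (0\<^sub>m m 1) (diagm m lam') $$ (i,j) = diagm N lam $$ (i,j)"
          using i j er unfolding E1_def N_def lam_def diagm_def by auto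
      qed (use E1c N_def in auto)
      finally show ?thesis .
    qed
    have "adj (W * V) * A * (W * V) = adj V * B * V"
    proof -
      have "adj (W * V) * A * (W * V) = adj V * adj W * A * (W * V)" using Wc Vc by (simp add: adj_mult)
      also have "\<dots> = adj V * (adj W * A * W) * V"
        using Wc Vc AN by (simp add: assoc_mult_mat[of _ N N _ N _ N] mult_carrier_mat[of _ N N _ N])
      finally show ?thesis unfolding B_def .
    qed
    then have "unitary N (W * V) \<and> adj (W * V) * A * (W * V) = diagm N lam"
      using VBV unitary_mult[OF W Vu] by simp
    then show "\<exists>U lam. unitary (Suc m) U \<and> adj U * A * U = diagm (Suc m) lam"
      unfolding N_def by blast
  qed
qed

lemma spectral: assumes A: "A \<in> carrier_mat n n" and h: "hermitian A"
  shows "\<exists>U lam. unitary n U \<and> A = U * diagm n lam * adj U"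
proof -
  obtain U lam where U: "unitary n U" and D: "adj U * A * U = diagm n lam"
    using spectral_aux A h by blast
  have Uc: "U \<in> carrier_mat n n" using U unitary_carrier by auto
  have "U * diagm n lam * adj U = (U * adj U) * A * (U * adj U)"
    unfolding D[symmetric] using Uc A by (simp add: assoc_mult_mat[of _ n n _ n _ n] mult_carrier_mat[of _ n n _ n])
  also have "\<dots> = A" using U A unfolding unitary_def by simp
  finally show ?thesis using U by metis
qed




lemma abel_aux:
  fixes E a :: "nat \<Rightarrow> real"
  assumes mono: "\<And>i j. i \<le> j \<Longrightarrow> j < n \<Longrightarrow> E i \<le> E j"
  and S: "\<And>k. k \<le> n \<Longrightarrow> (\<Sum>i<k. a i) \<le> 0"
  shows "(\<Sum>i<n. (E i - E (n-1)) * a i) \<ge> 0"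
  using assms
proof (induction n)
  case 0 then show ?case by simp
next
  case (Suc m)
  show ?case
  proof (cases "m = 0")
    case True then show ?thesis by simp
  next
    case False
    have IH: "(\<Sum>i<m. (E i - E (m-1)) * a i) \<ge> 0"
      using Suc.IH Suc.prems by auto
    have eq: "(\<Sum>i<m. (E i - E m) * a i) = (\<Sum>i<m. (E i - E (m-1)) * a i) + (E (m-1) - E m) * (\<Sum>i<m. a i)"
    proof -
      have "(\<Sum>i<m. (E i - E m) * a i) = (\<Sum>i<m. (E i - E (m-1)) * a i + (E (m-1) - E m) * a i)"
        by (intro sum.cong) (auto simp: algebra_simps)
      also have "\<dots> = (\<Sum>i<m. (E i - E (m-1)) * a i) + (E (m-1) - E m) * (\<Sum>i<m. a i)"
        by (simp only: sum.distrib sum_distrib_left)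
      finally show ?thesis .
    qed
    have "(E (m-1) - E m) * (\<Sum>i<m. a i) \<ge> 0"
      using Suc.prems(1)[of "m-1" m] Suc.prems(2)[of m] False
      by (intro mult_nonpos_nonpos) auto
    then show ?thesis using IH eq by simp
  qed
qed

lemma abel_nonneg:
  fixes E a :: "nat \<Rightarrow> real"
  assumes mono: "\<And>i j. i \<le> j \<Longrightarrow> j < n \<Longrightarrow> E i \<le> E j"
  and S: "\<And>k. k \<le> n \<Longrightarrow> (\<Sum>i<k. a i) \<le> 0"
  and S0: "(\<Sum>i<n. a i) = 0"
  shows "(\<Sum>i<n. E i * a i) \<ge> 0"
proof -
  have "(\<Sum>i<n. E i * a i) = (\<Sum>i<n. (E i - E (n-1)) * a i + E (n-1) * a i)"
    by (intro sum.cong) (auto simp: algebra_simps)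
  also have "\<dots> = (\<Sum>i<n. (E i - E (n-1)) * a i) + E (n-1) * (\<Sum>i<n. a i)"
    by (simp only: sum.distrib sum_distrib_left)
  finally have "(\<Sum>i<n. E i * a i) = (\<Sum>i<n. (E i - E (n-1)) * a i) + E (n-1) * (\<Sum>i<n. a i)" .
  then show ?thesis using abel_aux[OF assms(1,2)] S0 by simp
qed

lemma partial_le:
  fixes mu c :: "nat \<Rightarrow> real"
  assumes dec: "\<And>i j. i \<le> j \<Longrightarrow> j < n \<Longrightarrow> mu j \<le> mu i"
  and c01: "\<And>j. j < n \<Longrightarrow> 0 \<le> c j \<and> c j \<le> 1"
  and sumc: "(\<Sum>j<n. c j) = real k" and kn: "k \<le> n"
  shows "(\<Sum>j<n. c j * mu j) \<le> (\<Sum>j<k. mu j)"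
proof (cases "k = 0")
  case True
  then have "\<forall>j\<in>{..<n}. c j = 0" using sumc c01 by (subst sum_nonneg_eq_0_iff[symmetric]) auto
  then show ?thesis using True by simp
next
  case False
  define t where "t = mu (k-1)"
  have "(\<Sum>j<n. c j * mu j) = (\<Sum>j<n. c j * (mu j - t)) + real k * t"
    using sumc by (simp add: algebra_simps sum_subtractf sum_distrib_left[symmetric])
  also have "(\<Sum>j<n. c j * (mu j - t)) \<le> (\<Sum>j<n. if j < k then mu j - t else 0)"
  proof (rule sum_mono)
    fix j assume j: "j \<in> {..<n}"
    show "c j * (mu j - t) \<le> (if j < k then mu j - t else 0)"
    proof (cases "j < k")
      case True
      then have "mu j - t \<ge> 0" using dec[of j "k-1"] kn False unfolding t_def by auto
      then show ?thesis using True c01[of j] j by (simp add: mult_left_le_one_le)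
    next
      case F: False
      then have "mu j - t \<le> 0" using dec[of "k-1" j] kn False j unfolding t_def by auto
      then show ?thesis using F c01[of j] j by (simp add: mult_nonneg_nonpos)
    qed
  qed
  also have "(\<Sum>j<n. if j < k then mu j - t else 0) = (\<Sum>j<k. mu j - t)"
  proof -
    have "(\<Sum>j<n. if j < k then mu j - t else 0) = (\<Sum>j\<in>{..<n} \<inter> {j. j < k}. mu j - t)"
      by (simp add: sum.inter_restrict)
    also have "{..<n} \<inter> {j. j < k} = {..<k}" using kn by auto
    finally show ?thesis .
  qed
  finally show ?thesis by (simp add: sum_subtractf)
qed

lemma ds_sorted:
  fixes N :: "nat \<Rightarrow> nat \<Rightarrow> real" and mu En :: "nat \<Rightarrow> real"
  assumes mono: "\<And>i j. i \<le> j \<Longrightarrow> j < d \<Longrightarrow> En i \<le> En j"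
  and dec: "\<And>i j. i \<le> j \<Longrightarrow> j < d \<Longrightarrow> mu j \<le> mu i"
  and nn: "\<And>i j. i < d \<Longrightarrow> j < d \<Longrightarrow> 0 \<le> N i j"
  and rows: "\<And>i. i < d \<Longrightarrow> (\<Sum>j<d. N i j) = 1"
  and cols: "\<And>j. j < d \<Longrightarrow> (\<Sum>i<d. N i j) = 1"
  shows "(\<Sum>i<d. En i * mu i) \<le> (\<Sum>i<d. En i * (\<Sum>j<d. N i j * mu j))"
proof -
  define a where "a i = (\<Sum>j<d. N i j * mu j) - mu i" for i
  have px: "(\<Sum>i<k. (\<Sum>j<d. N i j * mu j)) = (\<Sum>j<d. (\<Sum>i<k. N i j) * mu j)" for k
    by (simp add: sum.swap[of _ "{..<k}"] sum_distrib_right)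
  have S: "(\<Sum>i<k. a i) \<le> 0" if k: "k \<le> d" for k
  proof -
    have c01: "0 \<le> (\<Sum>i<k. N i j) \<and> (\<Sum>i<k. N i j) \<le> 1" if j: "j < d" for j
    proof
      show "0 \<le> (\<Sum>i<k. N i j)" using nn j k by (intro sum_nonneg) auto
      have "(\<Sum>i<k. N i j) \<le> (\<Sum>i<d. N i j)"
        using nn j k by (intro sum_mono2) auto
      then show "(\<Sum>i<k. N i j) \<le> 1" using cols j by simp
    qed
    have sc: "(\<Sum>j<d. (\<Sum>i<k. N i j)) = real k"
    proof -
      have "(\<Sum>j<d. (\<Sum>i<k. N i j)) = (\<Sum>i<k. (\<Sum>j<d. N i j))" by (rule sum.swap)
      also have "\<dots> = (\<Sum>i<k. 1)" using rows k by (intro sum.cong) auto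
      finally show ?thesis by simp
    qed
    have "(\<Sum>j<d. (\<Sum>i<k. N i j) * mu j) \<le> (\<Sum>j<k. mu j)"
      by (rule partial_le[OF dec c01 sc k]) auto
    then show ?thesis unfolding a_def by (simp add: sum_subtractf px)
  qed
  have S0: "(\<Sum>i<d. a i) = 0"
    unfolding a_def by (simp add: sum_subtractf px cols)
  have "(\<Sum>i<d. En i * a i) \<ge> 0" by (rule abel_nonneg[OF mono S S0]) auto
  then show ?thesis unfolding a_def by (simp add: algebra_simps sum_subtractf)
qed

lemma swap_sum:
  fixes g h :: "nat \<Rightarrow> real"
  assumes "i < d" "j < d" "i \<noteq> j" "\<And>l. l \<noteq> i \<Longrightarrow> l \<noteq> j \<Longrightarrow> h l = g l"
  shows "(\<Sum>l<d. h l) - (\<Sum>l<d. g l) = (h i - g i) + (h j - g j)"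
proof -
  have "(\<Sum>l<d. h l) - (\<Sum>l<d. g l) = (\<Sum>l<d. h l - g l)" by (simp add: sum_subtractf)
  also have "\<dots> = (\<Sum>l\<in>{i,j}. h l - g l)"
    using assms by (intro sum.mono_neutral_right) auto
  also have "\<dots> = (h i - g i) + (h j - g j)" using assms by simp
  finally show ?thesis .
qed

lemma ds_perm:
  fixes M :: "nat \<Rightarrow> nat \<Rightarrow> real" and lam En :: "nat \<Rightarrow> real"
  assumes sm: "strict_mono_on {..<d} En"
  and nn: "\<And>i j. i < d \<Longrightarrow> j < d \<Longrightarrow> 0 \<le> M i j"
  and rows: "\<And>i. i < d \<Longrightarrow> (\<Sum>j<d. M i j) = 1"
  and cols: "\<And>j. j < d \<Longrightarrow> (\<Sum>i<d. M i j) = 1"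
  shows "\<exists>\<pi>. \<pi> permutes {..<d} \<and>
     (\<Sum>i<d. En i * lam (\<pi> i)) \<le> (\<Sum>i<d. En i * (\<Sum>j<d. M i j * lam j))"
proof -
  define f where "f \<pi> = (\<Sum>i<d. En i * lam (\<pi> i))" for \<pi> :: "nat \<Rightarrow> nat"
  define S where "S = {\<pi>. \<pi> permutes {..<d}}"
  have finS: "finite S" unfolding S_def by (rule finite_permutations) simp
  have neS: "S \<noteq> {}" unfolding S_def using permutes_id by blast
  define \<pi> where "\<pi> = arg_min_on f S"
  have piS: "\<pi> \<in> S" and pimin: "\<And>\<sigma>. \<sigma> \<in> S \<Longrightarrow> f \<pi> \<le> f \<sigma>"
    using arg_min_if_finite[OF finS neS, of f] unfolding \<pi>_def
    by (auto simp: not_less)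
  have perm: "\<pi> permutes {..<d}" using piS S_def by auto
  have mono: "En i \<le> En j" if "i \<le> j" "j < d" for i j
    using sm that unfolding strict_mono_on_def by (cases "i = j") (auto intro: less_imp_le)
  have dec: "lam (\<pi> j) \<le> lam (\<pi> i)" if ij: "i \<le> j" "j < d" for i j
  proof (rule ccontr)
    assume lt: "\<not> ?thesis"
    then have ne: "i \<noteq> j" by auto
    have lt2: "i < j" using ij ne by auto
    define \<sigma> where "\<sigma> = \<pi> \<circ> Transposition.transpose i j"
    have "\<sigma> \<in> S" unfolding S_def \<sigma>_def
      using perm ij by (auto intro!: permutes_compose permutes_swap_id)
    then have "f \<pi> \<le> f \<sigma>" by (rule pimin)
    moreover have "f \<sigma> - f \<pi> = (En i - En j) * (lam (\<pi> j) - lam (\<pi> i))"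
    proof -
      have "f \<sigma> - f \<pi> = (En i * lam (\<sigma> i) - En i * lam (\<pi> i)) + (En j * lam (\<sigma> j) - En j * lam (\<pi> j))"
        unfolding f_def by (rule swap_sum) (use ij ne in \<open>auto simp: \<sigma>_def\<close>)
      then show ?thesis by (simp add: \<sigma>_def algebra_simps)
    qed
    moreover have "(En i - En j) * (lam (\<pi> j) - lam (\<pi> i)) < 0"
      using sm lt lt2 ij unfolding strict_mono_on_def by (intro mult_neg_pos) auto
    ultimately show False by simp
  qed
  define N where "N i j = M i (\<pi> j)" for i j
  have pid: "\<pi> j < d" if "j < d" for j using permutes_in_image[OF perm, of j] that by simp
  have reidx: "(\<Sum>j<d. M i j * lam j) = (\<Sum>j<d. N i j * lam (\<pi> j))" for i
    unfolding N_def using sum.permute[OF perm, of "\<lambda>j. M i j * lam j"] by simp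
  have "(\<Sum>i<d. En i * lam (\<pi> i)) \<le> (\<Sum>i<d. En i * (\<Sum>j<d. N i j * lam (\<pi> j)))"
  proof (rule ds_sorted)
    show "\<And>i j. i \<le> j \<Longrightarrow> j < d \<Longrightarrow> En i \<le> En j" by (rule mono)
    show "\<And>i j. i \<le> j \<Longrightarrow> j < d \<Longrightarrow> lam (\<pi> j) \<le> lam (\<pi> i)" by (rule dec)
    show "\<And>i j. i < d \<Longrightarrow> j < d \<Longrightarrow> 0 \<le> N i j" unfolding N_def using nn pid by auto
    show "\<And>j. j < d \<Longrightarrow> (\<Sum>i<d. N i j) = 1" unfolding N_def using cols pid by auto
    fix i assume i: "i < d"
    have "(\<Sum>j<d. N i j) = (\<Sum>j<d. M i j)"
      unfolding N_def using sum.permute[OF perm, of "\<lambda>j. M i j"] by simp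
    then show "(\<Sum>j<d. N i j) = 1" using rows i by simp
  qed
  then show ?thesis using perm reidx by auto
qed




lemma energy_diag_sandwich: assumes X: "X \<in> carrier_mat d d"
  shows "energy d En (X * diagm d lam * adj X) = (\<Sum>i<d. En i * (\<Sum>j<d. (cmod (X $$ (i,j)))^2 * lam j))"
proof -
  have c: "X * diagm d lam * adj X \<in> carrier_mat d d" using X by auto
  show ?thesis unfolding energy_eq[OF c]
    by (intro sum.cong refl) (simp add: sandwich_diag[OF X])
qed

lemma unitary_row_sum: assumes U: "unitary d U" and i: "i < d"
  shows "(\<Sum>j<d. (cmod (U $$ (i,j)))^2) = 1"
proof -
  have Uc: "U \<in> carrier_mat d d" using U unitary_carrier by auto
  have "complex_of_real (\<Sum>j<d. (cmod (U $$ (i,j)))^2) = (U * adj U) $$ (i,i)"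
    using sandwich_one_diag[OF Uc i] by simp
  also have "\<dots> = 1" using U i unfolding unitary_def by simp
  finally show ?thesis by (metis of_real_eq_1_iff)
qed

lemma bdd_energy: assumes A: "A \<in> carrier_mat d d" and h: "hermitian A"
  shows "bdd_below ((\<lambda>U. energy d En (U * A * adj U)) ` {U. unitary d U})"
proof -
  obtain W lam where W: "unitary d W" and AW: "A = W * diagm d lam * adj W"
    using spectral[OF A h] by blast
  have Wc: "W \<in> carrier_mat d d" using W unitary_carrier by auto
  define b where "b = - (\<Sum>i<d. \<Sum>j<d. \<bar>En i\<bar> * \<bar>lam j\<bar>)"
  show ?thesis unfolding bdd_below_def
  proof (intro exI ballI)
    fix x assume "x \<in> (\<lambda>U. energy d En (U * A * adj U)) ` {U. unitary d U}"
    then obtain U where U: "unitary d U" and x: "x = energy d En (U * A * adj U)" by auto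
    have Uc: "U \<in> carrier_mat d d" using U unitary_carrier by auto
    define X where "X = U * W"
    have Xu: "unitary d X" unfolding X_def using unitary_mult[OF U W] .
    have Xc: "X \<in> carrier_mat d d" using Xu unitary_carrier by auto
    have "U * A * adj U = X * diagm d lam * adj X"
      unfolding AW X_def using Uc Wc
      by (simp add: adj_mult[OF Uc Wc] assoc_mult_mat[of _ d d _ d _ d] mult_carrier_mat[of _ d d _ d])
    then have x2: "x = (\<Sum>i<d. En i * (\<Sum>j<d. (cmod (X $$ (i,j)))^2 * lam j))"
      using x energy_diag_sandwich[OF Xc] by simp
    have le1: "(cmod (X $$ (i,j)))^2 \<le> 1" if "i < d" "j < d" for i j
    proof -
      have "(cmod (X $$ (i,j)))^2 \<le> (\<Sum>j<d. (cmod (X $$ (i,j)))^2)"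
        using that by (intro member_le_sum) auto
      then show ?thesis using unitary_row_sum[OF Xu that(1)] by simp
    qed
    have "b \<le> (\<Sum>i<d. \<Sum>j<d. En i * ((cmod (X $$ (i,j)))^2 * lam j))"
      unfolding b_def sum_negf[symmetric]
    proof (intro sum_mono)
      fix i j assume i: "i \<in> {..<d}" and j: "j \<in> {..<d}"
      have "\<bar>En i * ((cmod (X $$ (i,j)))^2 * lam j)\<bar> \<le> \<bar>En i\<bar> * \<bar>lam j\<bar>"
      proof -
        have "(cmod (X $$ (i,j)))^2 * \<bar>lam j\<bar> \<le> \<bar>lam j\<bar>"
          using le1[of i j] i j by (intro mult_left_le_one_le) auto
        then show ?thesis by (simp add: abs_mult mult_left_mono)
      qed
      then show "- (\<bar>En i\<bar> * \<bar>lam j\<bar>) \<le> En i * ((cmod (X $$ (i,j)))^2 * lam j)" by linarith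
    qed
    then show "b \<le> x" unfolding x2 by (simp add: sum_distrib_left)
  qed
qed

lemma Re_sum_list: "Re (\<Sum>x\<leftarrow>xs. f x) = (\<Sum>x\<leftarrow>xs. Re (f x))"
  by (induction xs) auto

lemma sum_list_sum_swap: "(\<Sum>x\<leftarrow>xs. \<Sum>j\<in>S. f x j) = (\<Sum>j\<in>S. \<Sum>x\<leftarrow>xs. f x j)"
  by (induction xs) (auto simp: sum.distrib)

lemma sum_list_mult_swap: "(\<Sum>x\<leftarrow>xs. \<Sum>j\<in>S. f x j * (c j :: real)) = (\<Sum>j\<in>S. (\<Sum>x\<leftarrow>xs. f x j) * c j)"
  by (induction xs) (auto simp: sum.distrib distrib_right)

lemma sandwich_carrier[intro]: "A \<in> carrier_mat d d \<Longrightarrow> B \<in> carrier_mat d d \<Longrightarrow> A * B * adj A \<in> carrier_mat d d"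
  by auto

lemma prod_adj_carrier[intro]: "A \<in> carrier_mat d d \<Longrightarrow> A * adj A \<in> carrier_mat d d"
  by auto

lemma adj_prod_carrier[intro]: "A \<in> carrier_mat d d \<Longrightarrow> adj A * A \<in> carrier_mat d d"
  by auto

definition permat :: "nat \<Rightarrow> (nat \<Rightarrow> nat) \<Rightarrow> complex mat" where
  "permat d \<pi> = mat d d (\<lambda>(i,j). if j = \<pi> i then 1 else 0)"

lemma permat_unitary: assumes p: "\<pi> permutes {..<d}"
  shows "unitary d (permat d \<pi>)"
proof -
  define P where "P = permat d \<pi>"
  have Pc: "P \<in> carrier_mat d d" unfolding P_def permat_def by simp
  have pid: "\<pi> j < d" if "j < d" for j using permutes_in_image[OF p, of j] that by simp
  have inj: "\<pi> i = \<pi> k \<longleftrightarrow> i = k" for i k using permutes_inj[OF p] by (auto dest: injD)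
  have PP: "P * adj P = 1\<^sub>m d"
  proof (rule eq_matI)
    fix i k assume "i < dim_row (1\<^sub>m d)" "k < dim_col (1\<^sub>m d)"
    then have i: "i < d" and k: "k < d" by auto
    have "(P * adj P) $$ (i,k) = (\<Sum>j\<in>{0..<d}. (if j = \<pi> i then 1 else 0) * cnj (if j = \<pi> k then 1 else 0))"
      using Pc i k by (simp add: scalar_prod_def P_def permat_def)
    also have "\<dots> = (\<Sum>j\<in>{0..<d}. if j = \<pi> i then (if \<pi> i = \<pi> k then 1 else 0) else 0)"
      by (intro sum.cong) auto
    also have "\<dots> = (if \<pi> i = \<pi> k then 1 else 0)" using pid[OF i] by (simp add: sum.delta')
    finally show "(P * adj P) $$ (i,k) = 1\<^sub>m d $$ (i,k)" using i k inj by simp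
  qed (use Pc in auto)
  have PP2: "adj P * P = 1\<^sub>m d" by (rule mat_mult_left_right_inverse[OF _ _ PP]) (use Pc in auto)
  show ?thesis unfolding unitary_def P_def[symmetric] using Pc PP PP2 by auto
qed

lemma permat_energy: assumes p: "\<pi> permutes {..<d}"
  shows "energy d En (permat d \<pi> * diagm d lam * adj (permat d \<pi>)) = (\<Sum>i<d. En i * lam (\<pi> i))"
proof -
  have Pc: "permat d \<pi> \<in> carrier_mat d d" unfolding permat_def by simp
  have pid: "\<pi> j < d" if "j < d" for j using permutes_in_image[OF p, of j] that by simp
  show ?thesis unfolding energy_diag_sandwich[OF Pc]
  proof (intro sum.cong refl)
    fix i assume i: "i \<in> {..<d}"
    have "(\<Sum>j<d. (cmod (permat d \<pi> $$ (i,j)))^2 * lam j) = (\<Sum>j<d. if j = \<pi> i then lam j else 0)"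
      using i by (intro sum.cong) (auto simp: permat_def)
    also have "\<dots> = lam (\<pi> i)" using pid i by (simp add: sum.delta')
    finally show "En i * (\<Sum>j<d. (cmod (permat d \<pi> $$ (i,j)))^2 * lam j) = En i * lam (\<pi> i)" by simp
  qed
qed

lemma key:
  assumes As: "\<And>A. A \<in> set As \<Longrightarrow> A \<in> carrier_mat d d"
  and s1: "foldr (\<lambda>A acc. adj A * A + acc) As (0\<^sub>m d d) = 1\<^sub>m d"
  and s2: "foldr (\<lambda>A acc. A * adj A + acc) As (0\<^sub>m d d) = 1\<^sub>m d"
  and rho: "\<rho> \<in> carrier_mat d d" and hr: "hermitian \<rho>"
  and sm: "strict_mono_on {..<d} En"
  shows "\<exists>U. unitary d U \<and> energy d En (U * \<rho> * adj U)
           \<le> energy d En (foldr (\<lambda>A acc. A * \<rho> * adj A + acc) As (0\<^sub>m d d))"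
proof -
  obtain W lam where W: "unitary d W" and rW: "\<rho> = W * diagm d lam * adj W"
    using spectral[OF rho hr] by blast
  have Wc: "W \<in> carrier_mat d d" using W unitary_carrier by auto
  define D where "D = diagm d lam"
  have Dc: "D \<in> carrier_mat d d" unfolding D_def by simp
  define F where "F = foldr (\<lambda>A acc. A * \<rho> * adj A + acc) As (0\<^sub>m d d)"
  have AWc: "A * W \<in> carrier_mat d d" if "A \<in> set As" for A using As[OF that] Wc by auto
  have AW: "A * \<rho> * adj A = (A * W) * D * adj (A * W)" if A: "A \<in> set As" for A
  proof -
    have Ac: "A \<in> carrier_mat d d" using As[OF A] .
    show ?thesis unfolding rW D_def using Ac Wc
      by (simp add: adj_mult[OF Ac Wc] assoc_mult_mat[of _ d d _ d _ d] mult_carrier_mat[of _ d d _ d])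
  qed
  define M where "M i j = (\<Sum>A\<leftarrow>As. (cmod ((A * W) $$ (i,j)))^2)" for i j
  have ReF: "Re (F $$ (i,i)) = (\<Sum>j<d. M i j * lam j)" if i: "i < d" for i
  proof -
    have "F $$ (i,i) = (\<Sum>A\<leftarrow>As. (A * \<rho> * adj A) $$ (i,i))"
      unfolding F_def by (rule foldr_index) (simp_all add: sandwich_carrier As rho i)
    then have "Re (F $$ (i,i)) = (\<Sum>A\<leftarrow>As. Re ((A * \<rho> * adj A) $$ (i,i)))"
      by (simp add: Re_sum_list)
    also have "\<dots> = (\<Sum>A\<leftarrow>As. \<Sum>j<d. (cmod ((A * W) $$ (i,j)))^2 * lam j)"
      by (intro arg_cong[of _ _ sum_list] map_cong refl)
         (simp add: AW sandwich_diag[OF AWc i] D_def)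
    also have "\<dots> = (\<Sum>j<d. M i j * lam j)" unfolding M_def by (rule sum_list_mult_swap)
    finally show ?thesis .
  qed
  have Fc: "F \<in> carrier_mat d d" unfolding F_def by (rule foldr_carrier) (simp_all add: sandwich_carrier As rho)
  have eF: "energy d En F = (\<Sum>i<d. En i * (\<Sum>j<d. M i j * lam j))"
    unfolding energy_eq[OF Fc] by (intro sum.cong refl) (simp add: ReF)
  have nn: "0 \<le> M i j" for i j unfolding M_def by (intro sum_list_nonneg) auto
  have rows: "(\<Sum>j<d. M i j) = 1" if i: "i < d" for i
  proof -
    have "(\<Sum>j<d. M i j) = (\<Sum>A\<leftarrow>As. \<Sum>j<d. (cmod ((A * W) $$ (i,j)))^2)"
      unfolding M_def by (rule sum_list_sum_swap[symmetric])
    also have "\<dots> = (\<Sum>A\<leftarrow>As. Re ((A * adj A) $$ (i,i)))"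
    proof (intro arg_cong[of _ _ sum_list] map_cong refl)
      fix A assume A: "A \<in> set As"
      have Ac: "A \<in> carrier_mat d d" using As[OF A] .
      have "(A * W) * adj (A * W) = A * (W * adj W) * adj A"
        using Ac Wc by (simp add: adj_mult[OF Ac Wc] assoc_mult_mat[of _ d d _ d _ d] mult_carrier_mat[of _ d d _ d])
      also have "\<dots> = A * adj A" using W Ac unfolding unitary_def by simp
      finally have "(A * W) * adj (A * W) = A * adj A" .
      then show "(\<Sum>j<d. (cmod ((A * W) $$ (i,j)))^2) = Re ((A * adj A) $$ (i,i))"
        using sandwich_one_diag[OF AWc[OF A] i] by simp
    qed
    also have "\<dots> = Re (\<Sum>A\<leftarrow>As. (A * adj A) $$ (i,i))" by (simp add: Re_sum_list)
    also have "(\<Sum>A\<leftarrow>As. (A * adj A) $$ (i,i)) = foldr (\<lambda>A acc. A * adj A + acc) As (0\<^sub>m d d) $$ (i,i)"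
      by (rule foldr_index[symmetric]) (simp_all add: prod_adj_carrier As i)
    also have "\<dots> = 1" unfolding s2 using i by simp
    finally show ?thesis by simp
  qed
  have cols: "(\<Sum>i<d. M i j) = 1" if j: "j < d" for j
  proof -
    have "(\<Sum>i<d. M i j) = (\<Sum>A\<leftarrow>As. \<Sum>i<d. (cmod ((A * W) $$ (i,j)))^2)"
      unfolding M_def by (rule sum_list_sum_swap[symmetric])
    also have "\<dots> = (\<Sum>A\<leftarrow>As. Re ((adj W * (adj A * A) * W) $$ (j,j)))"
    proof (intro arg_cong[of _ _ sum_list] map_cong refl)
      fix A assume A: "A \<in> set As"
      have Ac: "A \<in> carrier_mat d d" using As[OF A] .
      have "adj (A * W) * (A * W) = adj W * (adj A * A) * W"
        using Ac Wc by (simp add: adj_mult[OF Ac Wc] assoc_mult_mat[of _ d d _ d _ d] mult_carrier_mat[of _ d d _ d])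
      then show "(\<Sum>i<d. (cmod ((A * W) $$ (i,j)))^2) = Re ((adj W * (adj A * A) * W) $$ (j,j))"
        using adj_sandwich_one_diag[OF AWc[OF A] j] by simp
    qed
    also have "\<dots> = Re (\<Sum>A\<leftarrow>As. (adj W * (adj A * A) * W) $$ (j,j))" by (simp add: Re_sum_list)
    also have "(\<Sum>A\<leftarrow>As. (adj W * (adj A * A) * W) $$ (j,j))
        = foldr (\<lambda>A acc. adj W * (adj A * A) * W + acc) As (0\<^sub>m d d) $$ (j,j)"
      by (rule foldr_index[symmetric]) (simp_all add: mult_carrier_mat[of _ d d _ d] adj_prod_carrier As j Wc adj_carrier)
    also have "foldr (\<lambda>A acc. adj W * (adj A * A) * W + acc) As (0\<^sub>m d d)
        = adj W * foldr (\<lambda>A acc. adj A * A + acc) As (0\<^sub>m d d) * W"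
      by (rule foldr_sandwich) (simp_all add: adj_prod_carrier As Wc adj_carrier)
    also have "\<dots> = 1\<^sub>m d" unfolding s1 using W Wc unfolding unitary_def by simp
    finally show ?thesis using j by simp
  qed
  obtain \<pi> where p: "\<pi> permutes {..<d}"
    and ineq: "(\<Sum>i<d. En i * lam (\<pi> i)) \<le> (\<Sum>i<d. En i * (\<Sum>j<d. M i j * lam j))"
    using ds_perm[OF sm, of M lam] nn rows cols by blast
  define P where "P = permat d \<pi>"
  have Pu: "unitary d P" unfolding P_def by (rule permat_unitary[OF p])
  have Pc: "P \<in> carrier_mat d d" using Pu unitary_carrier by auto
  define U where "U = P * adj W"
  have Uu: "unitary d U" unfolding U_def by (rule unitary_mult[OF Pu unitary_adj[OF W]])
  have "U * \<rho> * adj U = P * (adj W * W) * D * (adj W * W) * adj P"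
    unfolding U_def rW D_def[symmetric] using Pc Wc Dc
    by (simp add: adj_mult[of P d d "adj W" d] assoc_mult_mat[of _ d d _ d _ d] mult_carrier_mat[of _ d d _ d])
  also have "\<dots> = P * D * adj P" using W Pc Dc unfolding unitary_def by simp
  finally have "energy d En (U * \<rho> * adj U) = (\<Sum>i<d. En i * lam (\<pi> i))"
    using permat_energy[OF p] unfolding P_def D_def by simp
  then show ?thesis using Uu ineq eF unfolding F_def by auto
qed




lemma energy_add: assumes "X \<in> carrier_mat d d" "Y \<in> carrier_mat d d"
  shows "energy d En (X + Y) = energy d En X + energy d En Y"
  using assms by (simp add: energy_eq sum.distrib distrib_left)

lemma energy_smult: assumes "X \<in> carrier_mat d d"
  shows "energy d En (complex_of_real r \<cdot>\<^sub>m X) = r * energy d En X"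
  using assms by (simp add: energy_eq sum_distrib_left mult_ac)

lemma of_real_sum_list: "complex_of_real (\<Sum>x\<leftarrow>xs. f x) = (\<Sum>x\<leftarrow>xs. complex_of_real (f x))"
  by (induction xs) auto

lemma diagm_psd: assumes "\<And>i. 0 \<le> lam i"
  shows "psd d (diagm d lam)"
proof -
  have h: "hermitian (diagm d lam)" unfolding hermitian_def
    by (rule eq_matI) (auto simp: diagm_def)
  have "0 \<le> Re (conjugate v \<bullet> (diagm d lam *\<^sub>v v))" if v: "v \<in> carrier_vec d" for v
  proof -
    have Dv: "(diagm d lam *\<^sub>v v) $ a = complex_of_real (lam a) * v $ a" if a: "a < d" for a
    proof -
      have "(diagm d lam *\<^sub>v v) $ a = (\<Sum>b\<in>{0..<d}. diagm d lam $$ (a,b) * v $ b)"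
        using v a by (simp add: scalar_prod_def mult_mat_vec_def row_def)
      also have "\<dots> = (\<Sum>b\<in>{a}. diagm d lam $$ (a,b) * v $ b)"
        using a by (intro sum.mono_neutral_right) (auto simp: diagm_def)
      finally show ?thesis using a by (simp add: diagm_def)
    qed
    have "conjugate v \<bullet> (diagm d lam *\<^sub>v v) = (\<Sum>a\<in>{0..<dim_vec (diagm d lam *\<^sub>v v)}. conjugate v $ a * (diagm d lam *\<^sub>v v) $ a)"
      unfolding scalar_prod_def ..
    also have "\<dots> = (\<Sum>a\<in>{0..<d}. cnj (v $ a) * (complex_of_real (lam a) * v $ a))"
      using v by (intro sum.cong) (auto simp: Dv simp del: index_mult_mat_vec)
    also have "\<dots> = (\<Sum>a\<in>{0..<d}. complex_of_real (lam a * (cmod (v $ a))^2))"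
    proof (intro sum.cong refl)
      fix a
      have "cnj (v $ a) * (complex_of_real (lam a) * v $ a) = complex_of_real (lam a) * (v $ a * cnj (v $ a))"
        by (simp add: mult_ac)
      also have "\<dots> = complex_of_real (lam a * (cmod (v $ a))^2)" by (simp only: zcnj of_real_mult)
      finally show "cnj (v $ a) * (complex_of_real (lam a) * v $ a) = complex_of_real (lam a * (cmod (v $ a))^2)" .
    qed
    finally have "Re (conjugate v \<bullet> (diagm d lam *\<^sub>v v)) = (\<Sum>a\<in>{0..<d}. lam a * (cmod (v $ a))^2)"
      by (simp add: Re_sum)
    also have "\<dots> \<ge> 0" using assms by (intro sum_nonneg) auto
    finally show ?thesis .
  qed
  then show ?thesis unfolding psd_def using h by auto
qed

lemma ep_s2:
  assumes Ks: "\<And>K. K \<in> set Ks \<Longrightarrow> K \<in> carrier_mat d d"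
  and ep: "\<And>\<rho>. density d \<rho> \<Longrightarrow> (\<forall>i<d. \<Phi> \<rho> $$ (i,i) = \<rho> $$ (i,i))"
  and Phi: "\<And>\<rho>. \<rho> \<in> carrier_mat d d \<Longrightarrow> \<Phi> \<rho> = foldr (\<lambda>K acc. K * \<rho> * adj K + acc) Ks (0\<^sub>m d d)"
  shows "foldr (\<lambda>K acc. K * adj K + acc) Ks (0\<^sub>m d d) = 1\<^sub>m d"
proof -
  have colsum: "(\<Sum>K\<leftarrow>Ks. (cmod (K $$ (i,j)))^2) = (if i = j then 1 else 0)" if i: "i < d" and j: "j < d" for i j
  proof -
    define lam where "lam a = (if a = j then 1 else (0::real))" for a
    define R where "R = diagm d lam"
    have Rc: "R \<in> carrier_mat d d" unfolding R_def by simp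
    have "psd d R" unfolding R_def by (rule diagm_psd) (simp add: lam_def)
    moreover have "mtrace R = 1"
    proof -
      have "mtrace R = (\<Sum>a<d. if a = j then 1 else 0)" unfolding mtrace_def R_def
        by (intro sum.cong) (auto simp: diagm_def lam_def)
      also have "\<dots> = 1" using j by simp
      finally show ?thesis .
    qed
    ultimately have dR: "density d R" unfolding density_def by simp
    have "\<Phi> R $$ (i,i) = (\<Sum>K\<leftarrow>Ks. (K * R * adj K) $$ (i,i))"
      unfolding Phi[OF Rc] by (rule foldr_index) (simp_all add: Ks Rc i sandwich_carrier)
    also have "\<dots> = (\<Sum>K\<leftarrow>Ks. complex_of_real ((cmod (K $$ (i,j)))^2))"
    proof (intro arg_cong[of _ _ sum_list] map_cong refl)
      fix K assume K: "K \<in> set Ks"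
      have "(K * R * adj K) $$ (i,i) = complex_of_real (\<Sum>a<d. (cmod (K $$ (i,a)))^2 * lam a)"
        unfolding R_def by (rule sandwich_diag[OF Ks[OF K] i])
      also have "(\<Sum>a<d. (cmod (K $$ (i,a)))^2 * lam a) = (cmod (K $$ (i,j)))^2"
        using j by (simp add: lam_def if_distrib sum.delta' cong: if_cong)
      finally show "(K * R * adj K) $$ (i,i) = complex_of_real ((cmod (K $$ (i,j)))^2)" .
    qed
    also have "\<dots> = complex_of_real (\<Sum>K\<leftarrow>Ks. (cmod (K $$ (i,j)))^2)" by (simp add: of_real_sum_list)
    finally have "complex_of_real (\<Sum>K\<leftarrow>Ks. (cmod (K $$ (i,j)))^2) = R $$ (i,i)"
      using ep[OF dR] i by simp
    also have "R $$ (i,i) = complex_of_real (if i = j then 1 else 0)" using i by (simp add: R_def diagm_def lam_def)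
    finally show ?thesis by (simp only: of_real_eq_iff)
  qed
  have zero: "K $$ (i,j) = 0" if K: "K \<in> set Ks" and i: "i < d" and j: "j < d" and ij: "i \<noteq> j" for K i j
  proof -
    have "(\<Sum>K\<leftarrow>Ks. (cmod (K $$ (i,j)))^2) = 0" using colsum[OF i j] ij by simp
    then have "\<forall>x\<in>set (map (\<lambda>K. (cmod (K $$ (i,j)))^2) Ks). x = 0"
      by (subst sum_list_nonneg_eq_0_iff[symmetric]) auto
    then show ?thesis using K by auto
  qed
  show ?thesis
  proof (rule eq_matI)
    fix a b assume "a < dim_row (1\<^sub>m d)" "b < dim_col (1\<^sub>m d)"
    then have a: "a < d" and b: "b < d" by auto
    have "foldr (\<lambda>K acc. K * adj K + acc) Ks (0\<^sub>m d d) $$ (a,b) = (\<Sum>K\<leftarrow>Ks. (K * adj K) $$ (a,b))"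
      by (rule foldr_index) (simp_all add: Ks prod_adj_carrier a b)
    also have "\<dots> = 1\<^sub>m d $$ (a,b)"
    proof (cases "a = b")
      case True
      have "(\<Sum>K\<leftarrow>Ks. (K * adj K) $$ (a,b)) = (\<Sum>K\<leftarrow>Ks. complex_of_real ((cmod (K $$ (a,a)))^2))"
      proof (intro arg_cong[of _ _ sum_list] map_cong refl)
        fix K assume K: "K \<in> set Ks"
        have "(K * adj K) $$ (a,a) = complex_of_real (\<Sum>c<d. (cmod (K $$ (a,c)))^2)"
          by (rule sandwich_one_diag[OF Ks[OF K] a])
        also have "(\<Sum>c<d. (cmod (K $$ (a,c)))^2) = (\<Sum>c\<in>{a}. (cmod (K $$ (a,c)))^2)"
          using a zero[OF K a] by (intro sum.mono_neutral_right) auto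
        finally show "(K * adj K) $$ (a,b) = complex_of_real ((cmod (K $$ (a,a)))^2)" using True by simp
      qed
      also have "\<dots> = complex_of_real (\<Sum>K\<leftarrow>Ks. (cmod (K $$ (a,a)))^2)" by (simp add: of_real_sum_list)
      also have "\<dots> = 1" using colsum[OF a a] by simp
      finally show ?thesis using True a by simp
    next
      case False
      have "(\<Sum>K\<leftarrow>Ks. (K * adj K) $$ (a,b)) = (\<Sum>K\<leftarrow>Ks. 0)"
      proof (intro arg_cong[of _ _ sum_list] map_cong refl)
        fix K assume K: "K \<in> set Ks"
        have Kc: "K \<in> carrier_mat d d" using Ks[OF K] .
        have "(K * adj K) $$ (a,b) = (\<Sum>c\<in>{0..<d}. K $$ (a,c) * cnj (K $$ (b,c)))"
          using Kc a b by (simp add: scalar_prod_def)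
        also have "\<dots> = 0"
        proof (intro sum.neutral ballI)
          fix c assume "c \<in> {0..<d}"
          then have c: "c < d" by auto
          show "K $$ (a,c) * cnj (K $$ (b,c)) = 0"
          proof (cases "c = a")
            case True
            then have "K $$ (b,c) = 0" using zero[OF K b c] False by auto
            then show ?thesis by simp
          next
            case F: False
            then have "K $$ (a,c) = 0" using zero[OF K a c] by auto
            then show ?thesis by simp
          qed
        qed
        finally show "(K * adj K) $$ (a,b) = 0" .
      qed
      then show ?thesis using False a b by simp
    qed
    finally show "foldr (\<lambda>K acc. K * adj K + acc) Ks (0\<^sub>m d d) $$ (a,b) = 1\<^sub>m d $$ (a,b)" .
  next
    have "foldr (\<lambda>K acc. K * adj K + acc) Ks (0\<^sub>m d d) \<in> carrier_mat d d"
      by (rule foldr_carrier) (simp add: Ks prod_adj_carrier)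
    then show "dim_row (foldr (\<lambda>K acc. K * adj K + acc) Ks (0\<^sub>m d d)) = dim_row (1\<^sub>m d)"
      "dim_col (foldr (\<lambda>K acc. K * adj K + acc) Ks (0\<^sub>m d d)) = dim_col (1\<^sub>m d)" by auto
  qed
qed




lemma conj_channel:
  assumes Ks: "\<And>K. K \<in> set Ks \<Longrightarrow> K \<in> carrier_mat d d"
  and s1: "foldr (\<lambda>K acc. adj K * K + acc) Ks (0\<^sub>m d d) = 1\<^sub>m d"
  and s2: "foldr (\<lambda>K acc. K * adj K + acc) Ks (0\<^sub>m d d) = 1\<^sub>m d"
  and V: "unitary d V" and rho: "\<rho> \<in> carrier_mat d d"
  shows "(\<forall>A\<in>set (map (\<lambda>K. V * K) Ks). A \<in> carrier_mat d d)
    \<and> foldr (\<lambda>A acc. adj A * A + acc) (map (\<lambda>K. V * K) Ks) (0\<^sub>m d d) = 1\<^sub>m d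
    \<and> foldr (\<lambda>A acc. A * adj A + acc) (map (\<lambda>K. V * K) Ks) (0\<^sub>m d d) = 1\<^sub>m d
    \<and> foldr (\<lambda>A acc. A * \<rho> * adj A + acc) (map (\<lambda>K. V * K) Ks) (0\<^sub>m d d)
       = V * foldr (\<lambda>K acc. K * \<rho> * adj K + acc) Ks (0\<^sub>m d d) * adj V"
proof (intro conjI)
  have Vc: "V \<in> carrier_mat d d" using V unitary_carrier by auto
  show "\<forall>A\<in>set (map (\<lambda>K. V * K) Ks). A \<in> carrier_mat d d" using Ks Vc by auto
  have "foldr (\<lambda>A acc. adj A * A + acc) (map (\<lambda>K. V * K) Ks) (0\<^sub>m d d)
      = foldr (\<lambda>K acc. adj K * K + acc) Ks (0\<^sub>m d d)"
    unfolding foldr_map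
  proof (rule foldr_cong)
    fix a K assume K: "K \<in> set Ks"
    have Kc: "K \<in> carrier_mat d d" using Ks[OF K] .
    have "adj (V * K) * (V * K) = adj K * (adj V * V) * K"
      using Kc Vc by (simp add: adj_mult[OF Vc Kc] assoc_mult_mat[of _ d d _ d _ d] mult_carrier_mat[of _ d d _ d])
    also have "\<dots> = adj K * K" using V Kc unfolding unitary_def by simp
    finally show "((\<lambda>A acc. adj A * A + acc) \<circ> (\<lambda>K. V * K)) K a = adj K * K + a" by simp
  qed auto
  then show "foldr (\<lambda>A acc. adj A * A + acc) (map (\<lambda>K. V * K) Ks) (0\<^sub>m d d) = 1\<^sub>m d" using s1 by simp
  have "foldr (\<lambda>A acc. A * adj A + acc) (map (\<lambda>K. V * K) Ks) (0\<^sub>m d d)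
      = foldr (\<lambda>K acc. V * (K * adj K) * adj V + acc) Ks (0\<^sub>m d d)"
    unfolding foldr_map
  proof (rule foldr_cong)
    fix a K assume K: "K \<in> set Ks"
    have Kc: "K \<in> carrier_mat d d" using Ks[OF K] .
    have "(V * K) * adj (V * K) = V * (K * adj K) * adj V"
      using Kc Vc by (simp add: adj_mult[OF Vc Kc] assoc_mult_mat[of _ d d _ d _ d] mult_carrier_mat[of _ d d _ d])
    then show "((\<lambda>A acc. A * adj A + acc) \<circ> (\<lambda>K. V * K)) K a = V * (K * adj K) * adj V + a" by simp
  qed auto
  also have "\<dots> = V * foldr (\<lambda>K acc. K * adj K + acc) Ks (0\<^sub>m d d) * adj V"
    by (rule foldr_sandwich) (simp_all add: Ks Vc prod_adj_carrier)
  also have "\<dots> = 1\<^sub>m d" unfolding s2 using V Vc unfolding unitary_def by simp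
  finally show "foldr (\<lambda>A acc. A * adj A + acc) (map (\<lambda>K. V * K) Ks) (0\<^sub>m d d) = 1\<^sub>m d" .
  have "foldr (\<lambda>A acc. A * \<rho> * adj A + acc) (map (\<lambda>K. V * K) Ks) (0\<^sub>m d d)
      = foldr (\<lambda>K acc. V * (K * \<rho> * adj K) * adj V + acc) Ks (0\<^sub>m d d)"
    unfolding foldr_map
  proof (rule foldr_cong)
    fix a K assume K: "K \<in> set Ks"
    have Kc: "K \<in> carrier_mat d d" using Ks[OF K] .
    have "(V * K) * \<rho> * adj (V * K) = V * (K * \<rho> * adj K) * adj V"
      using Kc Vc rho by (simp add: adj_mult[OF Vc Kc] assoc_mult_mat[of _ d d _ d _ d] mult_carrier_mat[of _ d d _ d])
    then show "((\<lambda>A acc. A * \<rho> * adj A + acc) \<circ> (\<lambda>K. V * K)) K a = V * (K * \<rho> * adj K) * adj V + a" by simp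
  qed auto
  also have "\<dots> = V * foldr (\<lambda>K acc. K * \<rho> * adj K + acc) Ks (0\<^sub>m d d) * adj V"
    by (rule foldr_sandwich) (simp_all add: Ks Vc rho sandwich_carrier)
  finally show "foldr (\<lambda>A acc. A * \<rho> * adj A + acc) (map (\<lambda>K. V * K) Ks) (0\<^sub>m d d)
       = V * foldr (\<lambda>K acc. K * \<rho> * adj K + acc) Ks (0\<^sub>m d d) * adj V" .
qed

lemma lin_sandwich: assumes V: "V \<in> carrier_mat d d" and X: "X \<in> carrier_mat d d" and Y: "Y \<in> carrier_mat d d"
  shows "V * (a \<cdot>\<^sub>m X + b \<cdot>\<^sub>m Y) * adj V = a \<cdot>\<^sub>m (V * X * adj V) + b \<cdot>\<^sub>m (V * Y * adj V)"
proof -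
  have "V * (a \<cdot>\<^sub>m X + b \<cdot>\<^sub>m Y) = V * (a \<cdot>\<^sub>m X) + V * (b \<cdot>\<^sub>m Y)"
    by (rule mult_add_distrib_mat[of _ d d]) (use V X Y in auto)
  also have "\<dots> = a \<cdot>\<^sub>m (V * X) + b \<cdot>\<^sub>m (V * Y)"
    using mult_smult_distrib[OF V X] mult_smult_distrib[OF V Y] by simp
  finally have "V * (a \<cdot>\<^sub>m X + b \<cdot>\<^sub>m Y) = a \<cdot>\<^sub>m (V * X) + b \<cdot>\<^sub>m (V * Y)" .
  then have "V * (a \<cdot>\<^sub>m X + b \<cdot>\<^sub>m Y) * adj V = (a \<cdot>\<^sub>m (V * X) + b \<cdot>\<^sub>m (V * Y)) * adj V" by simp
  also have "\<dots> = (a \<cdot>\<^sub>m (V * X)) * adj V + (b \<cdot>\<^sub>m (V * Y)) * adj V"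
    by (rule add_mult_distrib_mat[of _ d d]) (use V X Y in auto)
  also have "\<dots> = a \<cdot>\<^sub>m (V * X * adj V) + b \<cdot>\<^sub>m (V * Y * adj V)"
    using mult_smult_assoc_mat[of "V * X" d d "adj V" d a] mult_smult_assoc_mat[of "V * Y" d d "adj V" d b] V X Y
    by simp
  finally show ?thesis .
qed

theorem mainTheorem1:
  fixes d :: nat and En :: "nat \<Rightarrow> real" and \<E> :: "complex mat \<Rightarrow> complex mat"
    and \<tau> :: "complex mat" and p :: real
  assumes "d \<ge> 1"
    and "strict_mono_on {..<d} En"
    and "energy_preserving d \<E> \<or> unital_energy_nonincreasing d En \<E>"
    and "passive_state d En \<tau>"
    and "0 \<le> p" and "p \<le> 1"
    and "density d \<rho>"
  shows "ergotropy d En (complex_of_real p \<cdot>\<^sub>m \<E> \<rho> + complex_of_real (1 - p) \<cdot>\<^sub>m \<tau>)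
           \<le> ergotropy d En \<rho>"
proof -
  note sm = assms(2) and ch = assms(3) and pas = assms(4) and p0 = assms(5) and p1 = assms(6)
  have rc: "\<rho> \<in> carrier_mat d d" and hr: "hermitian \<rho>"
    using assms(7) unfolding density_def psd_def by auto
  have dt: "density d \<tau>" using pas unfolding passive_state_def by auto
  have tc: "\<tau> \<in> carrier_mat d d" and ht: "hermitian \<tau>"
    using dt unfolding density_def psd_def by auto
  have qc: "quantum_channel d \<E>" using ch unfolding energy_preserving_def unital_energy_nonincreasing_def by auto
  then obtain Ks where Ks: "\<And>K. K \<in> set Ks \<Longrightarrow> K \<in> carrier_mat d d"
    and s1: "foldr (\<lambda>K acc. adj K * K + acc) Ks (0\<^sub>m d d) = 1\<^sub>m d"
    and Phi: "\<And>X. X \<in> carrier_mat d d \<Longrightarrow> \<E> X = foldr (\<lambda>K acc. K * X * adj K + acc) Ks (0\<^sub>m d d)"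
    unfolding quantum_channel_def by blast
  have Erc: "\<E> \<rho> \<in> carrier_mat d d" unfolding Phi[OF rc]
    by (rule foldr_carrier) (simp add: Ks rc sandwich_carrier)
  have s2: "foldr (\<lambda>K acc. K * adj K + acc) Ks (0\<^sub>m d d) = 1\<^sub>m d"
  proof (cases "energy_preserving d \<E>")
    case True
    then show ?thesis unfolding energy_preserving_def
      by (intro ep_s2[of Ks d \<E>]) (auto simp: Ks Phi)
  next
    case False
    then have u: "\<E> (1\<^sub>m d) = 1\<^sub>m d" using ch unfolding unital_energy_nonincreasing_def by auto
    have "foldr (\<lambda>K acc. K * adj K + acc) Ks (0\<^sub>m d d) = foldr (\<lambda>K acc. K * 1\<^sub>m d * adj K + acc) Ks (0\<^sub>m d d)"
    proof (rule foldr_cong)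
      fix a K assume "K \<in> set Ks"
      then have "K * 1\<^sub>m d = K" using Ks right_mult_one_mat by blast
      then show "K * adj K + a = K * 1\<^sub>m d * adj K + a" by simp
    qed auto
    also have "\<dots> = 1\<^sub>m d" using Phi[of "1\<^sub>m d"] u by simp
    finally show ?thesis .
  qed
  have eE: "energy d En (\<E> \<rho>) \<le> energy d En \<rho>"
  proof (cases "energy_preserving d \<E>")
    case True
    then have "\<forall>i<d. \<E> \<rho> $$ (i,i) = \<rho> $$ (i,i)" using assms(7) unfolding energy_preserving_def by auto
    then show ?thesis unfolding energy_eq[OF Erc] energy_eq[OF rc] by simp
  next
    case False
    then show ?thesis using ch assms(7) unfolding unital_energy_nonincreasing_def by auto
  qed
  define S where "S = {U. unitary d U}"
  define m where "m X = (INF U\<in>S. energy d En (U * X * adj U))" for X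
  have erg: "ergotropy d En X = energy d En X - m X" for X
    unfolding ergotropy_def m_def S_def ..
  have oneS: "1\<^sub>m d \<in> S" unfolding S_def unitary_def by simp
  then have ne: "S \<noteq> {}" by auto
  have mle: "m X \<le> energy d En (U * X * adj U)" if "X \<in> carrier_mat d d" "hermitian X" "U \<in> S" for X U
    unfolding m_def by (rule cINF_lower) (use bdd_energy[OF that(1,2)] that(3) S_def in auto)
  have mt: "m \<tau> = energy d En \<tau>" using pas erg unfolding passive_state_def by simp
  have mr: "m \<rho> \<le> energy d En \<rho>" using mle[OF rc hr oneS] rc by simp
  have keyV: "m \<rho> \<le> energy d En (V * \<E> \<rho> * adj V)" if V: "V \<in> S" for V
  proof -
    have Vu: "unitary d V" using V S_def by auto
    define As where "As = map (\<lambda>K. V * K) Ks"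
    have c: "(\<forall>A\<in>set As. A \<in> carrier_mat d d)
      \<and> foldr (\<lambda>A acc. adj A * A + acc) As (0\<^sub>m d d) = 1\<^sub>m d
      \<and> foldr (\<lambda>A acc. A * adj A + acc) As (0\<^sub>m d d) = 1\<^sub>m d
      \<and> foldr (\<lambda>A acc. A * \<rho> * adj A + acc) As (0\<^sub>m d d) = V * \<E> \<rho> * adj V"
      unfolding As_def Phi[OF rc] by (rule conj_channel[OF Ks s1 s2 Vu rc])
    obtain U where U: "unitary d U"
      and le: "energy d En (U * \<rho> * adj U) \<le> energy d En (foldr (\<lambda>A acc. A * \<rho> * adj A + acc) As (0\<^sub>m d d))"
      using key[of As d, OF _ _ _ rc hr sm] c by blast
    have "m \<rho> \<le> energy d En (U * \<rho> * adj U)" using mle[OF rc hr] U S_def by auto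
    then show ?thesis using le c by simp
  qed
  define \<sigma> where "\<sigma> = complex_of_real p \<cdot>\<^sub>m \<E> \<rho> + complex_of_real (1 - p) \<cdot>\<^sub>m \<tau>"
  have lin: "energy d En (V * \<sigma> * adj V) = p * energy d En (V * \<E> \<rho> * adj V) + (1 - p) * energy d En (V * \<tau> * adj V)"
    if V: "V \<in> S" for V
  proof -
    have Vc: "V \<in> carrier_mat d d" using V S_def unitary_carrier by auto
    have "V * \<sigma> * adj V = complex_of_real p \<cdot>\<^sub>m (V * \<E> \<rho> * adj V) + complex_of_real (1 - p) \<cdot>\<^sub>m (V * \<tau> * adj V)"
      unfolding \<sigma>_def by (rule lin_sandwich[OF Vc Erc tc])
    also have "energy d En \<dots> = energy d En (complex_of_real p \<cdot>\<^sub>m (V * \<E> \<rho> * adj V))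
        + energy d En (complex_of_real (1 - p) \<cdot>\<^sub>m (V * \<tau> * adj V))"
      by (rule energy_add) (use Vc Erc tc in auto)
    also have "\<dots> = p * energy d En (V * \<E> \<rho> * adj V) + (1 - p) * energy d En (V * \<tau> * adj V)"
      by (subst energy_smult, use Vc Erc in force)+ (use Vc tc in force)
    finally show ?thesis .
  qed
  have low: "p * m \<rho> + (1 - p) * energy d En \<tau> \<le> m \<sigma>"
    unfolding m_def[of \<sigma>]
  proof (rule cINF_greatest[OF ne])
    fix V assume V: "V \<in> S"
    have a: "p * m \<rho> \<le> p * energy d En (V * \<E> \<rho> * adj V)"
      using keyV[OF V] p0 by (rule mult_left_mono)
    have b: "(1 - p) * energy d En \<tau> \<le> (1 - p) * energy d En (V * \<tau> * adj V)"
      using mle[OF tc ht V] mt p1 by (intro mult_left_mono) auto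
    show "p * m \<rho> + (1 - p) * energy d En \<tau> \<le> energy d En (V * \<sigma> * adj V)"
      using a b lin[OF V] by simp
  qed
  have es: "energy d En \<sigma> = p * energy d En (\<E> \<rho>) + (1 - p) * energy d En \<tau>"
  proof -
    have "energy d En \<sigma> = energy d En (complex_of_real p \<cdot>\<^sub>m \<E> \<rho>) + energy d En (complex_of_real (1 - p) \<cdot>\<^sub>m \<tau>)"
      unfolding \<sigma>_def by (rule energy_add) (use Erc tc in auto)
    also have "\<dots> = p * energy d En (\<E> \<rho>) + (1 - p) * energy d En \<tau>"
      using energy_smult[OF Erc, of En p] energy_smult[OF tc, of En "1 - p"] by simp
    finally show ?thesis .
  qed
  have "ergotropy d En \<sigma> \<le> p * (energy d En (\<E> \<rho>) - m \<rho>)"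
    using low es erg[of \<sigma>] by (simp add: algebra_simps)
  also have "\<dots> \<le> p * (energy d En \<rho> - m \<rho>)" using eE p0 by (intro mult_left_mono) auto
  also have "\<dots> \<le> energy d En \<rho> - m \<rho>" using mr p0 p1 by (intro mult_left_le_one_le) auto
  finally show ?thesis unfolding \<sigma>_def erg[of \<rho>] .
qed


end
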